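(* Let $n$ be a positive integer, $x\in\Gamma_n$ and $z\in\{r,b\}^n$. Then \[ \tilde\xi_n(x,z)=n-\tfrac12+\tfrac12\,\#_{\mathrm{dl}}(x)+\tfrac12\,W_{\mathrm{tot}}(G_x)-\mathrm{wt}_{G_x}(z). \]
   Context: Let $[n]=\{1,\dots,n\}$. $\Gamma_n$ is the set of words $x=(x_1,\dots,x_{2n})\in[n]^{2n}$ in which every symbol of $[n]$ occurs exactly twice. Colours are formal symbols $r,b$; $\neg$ swaps them, $\neg^0$ is the identity, $\neg^1=\neg$. $[\,\cdot\,]$ is the Iverson bracket. For $f\in\{r,b\}^{2n}$, $\xi_n(f)=\sum_{i=1}^{2n-1}[f_i\neq f_{i+1}]$. For $z\in\{r,b\}^n$, $\mathcal E_n(x,z)_i=\neg^{[x_i\in\{x_1,\dots,x_{i-1}\}]}z_{x_i}$ and $\tilde\xi_n(x,z)=\xi_n(\mathcal E_n(x,z))$. For $i\in[2n-1]$, $\eta(x,i)=[x_{i+1}\in\{x_1,\dots,x_i\}]\oplus[x_i\in\{x_1,\dots,x_{i-1}\}]$. For $e\subseteq[n]$, $\theta_x(e)=-\sum_{i=1}^{2n-1}(-1)^{\eta(x,i)}\delta_{e,\{x_i,x_{i+1}\}}$. The BPSP graph $G_x=(V_x,E_x,W_x)$ has $V_x=[n]$, $E_x=\{\{x_i,x_{i+1}\}: i\in[2n-1],\ x_i\neq x_{i+1},\ \theta_x(\{x_i,x_{i+1}\})\neq0\}$, $W_x=\theta_x|_{E_x}$; $W_{\mathrm{tot}}(G_x)=\sum_{e\in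 E_x}W_x(e)$; $\mathrm{wt}_{G_x}(z)=\sum_{\{i,j\}\in E_x}W_x(\{i,j\})[z_i\neq z_j]$. $\#_{\mathrm{dl}}(x)=|\{i\in[2n-1]:x_i=x_{i+1}\}|$. *)

theory Defs
  imports Complex_Main
begin

text \<open>Words are functions on positions 1..2n (1-based, as in the paper);
colourings are functions on symbols 1..n.\<close>

datatype colour = Red | Blue

fun cneg :: "colour \<Rightarrow> colour" where
  "cneg Red = Blue" | "cneg Blue = Red"

definition negpow :: "bool \<Rightarrow> colour \<Rightarrow> colour" where
  "negpow b c = (if b then cneg c else c)"

definition iv :: "bool \<Rightarrow> int" where
  "iv b = (if b then 1 else 0)"

definition Gamma :: "nat \<Rightarrow> (nat \<Rightarrow> nat) set" where
  "Gamma n = {x. (\<forall>i\<in>{1..2*n}. x i \<in> {1..n}) \<and>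
                 (\<forall>k\<in>{1..n}. card {i\<in>{1..2*n}. x i = k} = 2)}"

definition xi :: "nat \<Rightarrow> (nat \<Rightarrow> colour) \<Rightarrow> int" where
  "xi n f = (\<Sum>i=1..2*n-1. iv (f i \<noteq> f (i+1)))"

definition seen :: "(nat \<Rightarrow> nat) \<Rightarrow> nat \<Rightarrow> bool" where
  "seen x i = (x i \<in> x ` {1..<i})"

definition Enc :: "(nat \<Rightarrow> nat) \<Rightarrow> (nat \<Rightarrow> colour) \<Rightarrow> nat \<Rightarrow> colour" where
  "Enc x z i = negpow (seen x i) (z (x i))"

definition xi_tilde :: "nat \<Rightarrow> (nat \<Rightarrow> nat) \<Rightarrow> (nat \<Rightarrow> colour) \<Rightarrow> int" where
  "xi_tilde n x z = xi n (Enc x z)"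

definition eta :: "(nat \<Rightarrow> nat) \<Rightarrow> nat \<Rightarrow> bool" where
  "eta x i = (seen x (i+1) \<noteq> seen x i)"

definition theta :: "nat \<Rightarrow> (nat \<Rightarrow> nat) \<Rightarrow> nat set \<Rightarrow> int" where
  "theta n x e = - (\<Sum>i=1..2*n-1. (-1) ^ (if eta x i then 1 else 0) * iv (e = {x i, x (i+1)}))"

definition edges :: "nat \<Rightarrow> (nat \<Rightarrow> nat) \<Rightarrow> nat set set" where
  "edges n x = {{x i, x (i+1)} | i. i \<in> {1..2*n-1} \<and> x i \<noteq> x (i+1)
                  \<and> theta n x {x i, x (i+1)} \<noteq> 0}"

definition Wtot :: "nat \<Rightarrow> (nat \<Rightarrow> nat) \<Rightarrow> int" where
  "Wtot n x = (\<Sum>e\<in>edges n x. theta n x e)"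

definition wt :: "nat \<Rightarrow> (nat \<Rightarrow> nat) \<Rightarrow> (nat \<Rightarrow> colour) \<Rightarrow> int" where
  "wt n x z = (\<Sum>e\<in>edges n x. theta n x e * iv (\<exists>i\<in>e. \<exists>j\<in>e. z i \<noteq> z j))"

definition ndl :: "nat \<Rightarrow> (nat \<Rightarrow> nat) \<Rightarrow> nat" where
  "ndl n x = card {i\<in>{1..2*n-1}. x i = x (i+1)}"

end

theory Submission
  imports Defs
begin

lemma iv_negpow:
  "iv (negpow a c \<noteq> negpow b d) = iv (b \<noteq> a) + iv (c \<noteq> d) * (-1) ^ (if b \<noteq> a then 1 else 0)"
  by (cases c; cases d; cases a; cases b; simp add: negpow_def iv_def)

lemma dl_eta:
  assumes x: "x \<in> Gamma n" and i: "i \<in> {1..2*n-1}" and eq: "x i = x (i+1)"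
  shows "eta x i"
proof -
  have s1: "seen x (i+1)" unfolding seen_def using eq i
    by (metis One_nat_def atLeastAtMost_iff atLeastLessThan_iff image_eqI less_add_one)
  have "\<not> seen x i"
  proof
    assume "seen x i"
    then obtain j where j: "j \<in> {1..<i}" "x j = x i" unfolding seen_def by auto
    have xi: "x i \<in> {1..n}" using x i unfolding Gamma_def by auto
    hence c: "card {k\<in>{1..2*n}. x k = x i} = 2" using x unfolding Gamma_def by auto
    have sub: "{j, i, i+1} \<subseteq> {k\<in>{1..2*n}. x k = x i}" using j i eq by auto
    have "card {j, i, i+1} \<le> 2" using card_mono[OF _ sub] c by simp
    moreover have "card {j, i, i+1} = 3" using j by auto
    ultimately show False by simp
  qed
  thus ?thesis using s1 unfolding eta_def by auto
qed

lemma sum_edges_gen: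
  fixes n x and f :: "nat set \<Rightarrow> int"
  defines "I \<equiv> {1..2*n-1}"
  defines "p \<equiv> (\<lambda>i. {x i, x (i+1)})"
  defines "E \<equiv> p ` {i\<in>I. x i \<noteq> x (i+1)}"
  shows "(\<Sum>e\<in>edges n x. theta n x e * f e)
       = - (\<Sum>i\<in>I. (-1) ^ (if eta x i then 1 else 0) * (if p i \<in> E then f (p i) else 0))"
proof -
  have fin: "finite E" unfolding E_def I_def by auto
  have sub: "edges n x \<subseteq> E" unfolding edges_def E_def p_def I_def by blast
  have "(\<Sum>e\<in>edges n x. theta n x e * f e) = (\<Sum>e\<in>E. theta n x e * f e)"
  proof (rule sum.mono_neutral_left[OF fin sub], rule ballI)
    fix e assume e: "e \<in> E - edges n x"
    then obtain i where i: "i \<in> I" "x i \<noteq> x (i+1)" "e = p i" unfolding E_def by auto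
    then have "theta n x e = 0" using e unfolding edges_def p_def I_def by blast
    thus "theta n x e * f e = 0" by simp
  qed
  also have "\<dots> = (\<Sum>e\<in>E. - (\<Sum>i\<in>I. (-1) ^ (if eta x i then 1 else 0) * (if e = p i then f e else 0)))"
    unfolding theta_def I_def p_def
    by (rule sum.cong) (auto simp: iv_def sum_distrib_right intro!: sum.cong)
  also have "\<dots> = - (\<Sum>i\<in>I. (-1) ^ (if eta x i then 1 else 0) * (\<Sum>e\<in>E. if e = p i then f e else 0))"
    by (simp add: sum_negf sum_distrib_left) (rule sum.swap)
  also have "\<dots> = - (\<Sum>i\<in>I. (-1) ^ (if eta x i then 1 else 0) * (if p i \<in> E then f (p i) else 0))"
    using fin by (simp add: sum.delta')
  finally show ?thesis .
qed

lemma inE: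
  "({x i, x (i+1)} \<in> (\<lambda>i. {x i, x (i+1)}) ` {i\<in>I. x i \<noteq> x (i+1)}) \<Longrightarrow> x i \<noteq> x (i+1)"
  by (auto simp: doubleton_eq_iff)

lemma inE2:
  "i \<in> I \<Longrightarrow> x i \<noteq> x (i+1) \<Longrightarrow> ({x i, x (i+1)} \<in> (\<lambda>i. {x i, x (i+1)}) ` {i\<in>I. x i \<noteq> x (i+1)})"
  by auto

theorem corollary3:
  fixes n :: nat and x :: "nat \<Rightarrow> nat" and z :: "nat \<Rightarrow> colour"
  assumes "n \<ge> 1" and "x \<in> Gamma n"
  shows "real_of_int (xi_tilde n x z) = real n - 1/2 + real (ndl n x) / 2 + real_of_int (Wtot n x) / 2 - real_of_int (wt n x z)"
proof -
  define I where "I = {1..2*n-1}"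
  define p where "p = (\<lambda>i. {x i, x (i+1)})"
  define E where "E = p ` {i\<in>I. x i \<noteq> x (i+1)}"
  define s where "s = (\<lambda>i. (-1::int) ^ (if eta x i then 1 else 0))"
  define d where "d = (\<lambda>i. iv (z (x i) \<noteq> z (x (i+1))))"
  have pE: "p i \<in> E \<longleftrightarrow> x i \<noteq> x (i+1)" if "i \<in> I" for i
    using inE[of x i I] inE2[of i I x] that unfolding E_def p_def by blast
  have h1: "xi_tilde n x z = (\<Sum>i\<in>I. iv (eta x i) + d i * s i)"
    unfolding xi_tilde_def xi_def Enc_def I_def d_def s_def
    by (rule sum.cong) (auto simp: iv_negpow eta_def)
  have h2: "wt n x z = - (\<Sum>i\<in>I. s i * d i)"
  proof -
    have "wt n x z = - (\<Sum>i\<in>I. s i * (if p i \<in> E then iv (\<exists>a\<in>p i. \<exists>b\<in>p i. z a \<noteq> z b) else 0))"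
      unfolding wt_def s_def I_def p_def E_def by (rule sum_edges_gen)
    also have "\<dots> = - (\<Sum>i\<in>I. s i * d i)"
    proof (rule arg_cong[where f=uminus], rule sum.cong[OF refl])
      fix i assume i: "i \<in> I"
      show "s i * (if p i \<in> E then iv (\<exists>a\<in>p i. \<exists>b\<in>p i. z a \<noteq> z b) else 0) = s i * d i"
      proof (cases "p i \<in> E")
        case True thus ?thesis unfolding d_def p_def iv_def by auto
      next
        case False thus ?thesis using pE[OF i] unfolding d_def iv_def by auto
      qed
    qed
    finally show ?thesis .
  qed
  have h3: "Wtot n x = - (\<Sum>i\<in>I. s i * iv (x i \<noteq> x (i+1)))"
  proof -
    have "Wtot n x = - (\<Sum>i\<in>I. s i * (if p i \<in> E then 1 else 0))"
      using sum_edges_gen[of n x "\<lambda>_. 1"]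
      unfolding Wtot_def s_def I_def p_def E_def by simp
    also have "\<dots> = - (\<Sum>i\<in>I. s i * iv (x i \<noteq> x (i+1)))"
      by (rule arg_cong[where f=uminus], rule sum.cong) (auto simp: pE iv_def)
    finally show ?thesis .
  qed
  have h4: "int (ndl n x) = (\<Sum>i\<in>I. iv (x i = x (i+1)))"
    unfolding ndl_def I_def iv_def by (simp add: sum.If_cases Int_def conj_commute)
  have h5: "2 * iv (eta x i) = 1 + iv (x i = x (i+1)) - s i * iv (x i \<noteq> x (i+1))" if "i \<in> I" for i
    using dl_eta[OF assms(2), of i] that unfolding I_def s_def iv_def by auto
  have cI: "card I = 2*n-1" unfolding I_def by simp
  have h6: "2 * (\<Sum>i\<in>I. iv (eta x i)) = int (2*n-1) + int (ndl n x) + Wtot n x"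
  proof -
    have "2 * (\<Sum>i\<in>I. iv (eta x i)) = (\<Sum>i\<in>I. 2 * iv (eta x i))" by (simp add: sum_distrib_left)
    also have "\<dots> = (\<Sum>i\<in>I. 1 + iv (x i = x (i+1)) - s i * iv (x i \<noteq> x (i+1)))"
      by (rule sum.cong) (auto simp: h5)
    also have "\<dots> = int (2*n-1) + int (ndl n x) + Wtot n x"
      by (simp add: sum.distrib sum_subtractf h3 h4 cI)
    finally show ?thesis .
  qed
  have h7: "xi_tilde n x z = (\<Sum>i\<in>I. iv (eta x i)) - wt n x z"
    by (simp add: h1 h2 sum.distrib mult.commute)
  have "real_of_int (2 * xi_tilde n x z) = real_of_int (int (2*n-1) + int (ndl n x) + Wtot n x - 2 * wt n x z)"
    using h6 h7 by simp
  moreover have "real (2*n-1) = 2 * real n - 1" using assms(1) by simp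
  ultimately show ?thesis by simp
qed

end
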